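(* Let $n$ be a positive integer and let $u$ denote the unique positive real root of $$x^{2n+1} + x^{2n} + \cdots + x^{n} - x^{n-1} - x^{n-2} - \cdots - x - 1 = 0$$ (so $u\in(0,1)$). Then $$2\,\mathrm{Li}_2\!\left(u^{n+2}\right) - 2\,\mathrm{Li}_2\!\left(u^{n}\right) - \mathrm{Li}_2\!\left(u^2\right) - n^2 \log^2(u) = -\zeta(2).$$
   Context: $\mathrm{Li}_2(z)=\sum_{k\ge1} z^k/k^2$ for $|z|\le 1$ is the dilogarithm, $\log$ is the real natural logarithm, and $\zeta(2)=\pi^2/6$. *)

theory Defs
  imports "HOL-Analysis.Analysis"
begin

definition Li2 :: "real \<Rightarrow> real" where
  "Li2 z = (\<Sum>k. z ^ Suc k / (real (Suc k))\<^sup>2)"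

end

theory Submission
  imports Defs
begin


lemma isq: "(\<lambda>k. 1 / (1 + real k)\<^sup>2) sums (pi\<^sup>2 / 6)"
  using inverse_squares_sums by simp

lemma isq_summable: "summable (\<lambda>k. 1 / (1 + real k)\<^sup>2)"
  by (rule sums_summable[OF isq])

lemma Li2_term_bound:
  fixes z :: real assumes "\<bar>z\<bar> \<le> 1"
  shows "norm (z ^ Suc n / (real (Suc n))\<^sup>2) \<le> 1 / (1 + real n)\<^sup>2"
proof -
  have "\<bar>z\<bar> ^ Suc n \<le> 1" by (rule power_le_one) (use assms in auto)
  then have "\<bar>z\<bar> ^ Suc n / (1 + real n)\<^sup>2 \<le> 1 / (1 + real n)\<^sup>2"
    by (rule divide_right_mono) simp
  then show ?thesis by (simp add: power_abs abs_mult)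
qed

lemma Li2_summable:
  fixes z :: real assumes "\<bar>z\<bar> \<le> 1"
  shows "summable (\<lambda>k. z ^ Suc k / (real (Suc k))\<^sup>2)"
  by (rule summable_comparison_test[OF _ isq_summable]) (use Li2_term_bound[OF assms] in blast)

lemma Li2_one: "Li2 1 = pi\<^sup>2 / 6"
  unfolding Li2_def using isq by (simp add: sums_iff)

lemma Li2_cont: "continuous_on {-1..1} Li2"
proof -
  have ul: "uniform_limit {-1..1} (\<lambda>n x. \<Sum>i<n. x ^ Suc i / (real (Suc i))\<^sup>2)
        (\<lambda>x. suminf (\<lambda>i. x ^ Suc i / (real (Suc i))\<^sup>2)) sequentially"
    by (rule Weierstrass_m_test[OF _ isq_summable]) (rule Li2_term_bound, auto)
  have "continuous_on {-1..1} (\<lambda>x. suminf (\<lambda>i. x ^ Suc i / (real (Suc i))\<^sup>2))"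
    by (rule uniform_limit_theorem[OF always_eventually ul]) (auto intro!: continuous_intros)
  then show ?thesis unfolding Li2_def[abs_def] .
qed

lemma Li2_deriv:
  fixes z :: real assumes "0 < z" "z < 1"
  shows "(Li2 has_real_derivative (- ln (1 - z) / z)) (at z)"
proof -
  define c :: "nat \<Rightarrow> real" where "c n = (if n = 0 then 0 else 1 / (real n)\<^sup>2)" for n
  have cS: "c (Suc n) * y ^ Suc n = y ^ Suc n / (real (Suc n))\<^sup>2" for n and y :: real
    by (simp add: c_def)
  have eq: "Li2 y = (\<Sum>n. c n * y ^ n)" if "\<bar>y\<bar> \<le> 1" for y
  proof -
    have "(\<lambda>k. y ^ Suc k / (real (Suc k))\<^sup>2) sums Li2 y"
      unfolding Li2_def by (rule summable_sums[OF Li2_summable[OF that]])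
    then have "(\<lambda>n. c (Suc n) * y ^ Suc n) sums Li2 y"
      by (simp only: cS)
    then have "(\<lambda>n. c n * y ^ n) sums (Li2 y + c 0 * y ^ 0)"
      by (rule iffD1[OF sums_Suc_iff])
    then show ?thesis by (simp add: c_def sums_iff)
  qed
  have sm: "summable (\<lambda>n. c n * y ^ n)" if "norm y < 1" for y :: real
  proof -
    have "summable (\<lambda>n. c (Suc n) * y ^ Suc n)"
      unfolding cS by (rule Li2_summable) (use that in simp)
    then show ?thesis by (rule iffD1[OF summable_Suc_iff])
  qed
  have D: "((\<lambda>y. \<Sum>n. c n * y ^ n) has_field_derivative (\<Sum>n. diffs c n * z ^ n)) (at z)"
    by (rule termdiffs_strong'[of 1]) (use sm assms in auto)
  have dc: "diffs c n * z ^ n = z ^ Suc n / real (Suc n) / z" for n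
    using assms by (simp add: diffs_def c_def power2_eq_square)
  have "(\<lambda>n. - ((-(-z))^n) / of_nat n) sums ln (1 + (-z))"
    by (rule ln_series') (use assms in auto)
  then have "(\<lambda>n. - (- (z ^ n / of_nat n))) sums (- ln (1 - z))"
    by (intro sums_minus) simp
  then have "(\<lambda>n. z ^ n / of_nat n) sums (- ln (1 - z) + z ^ 0 / of_nat 0)"
    by simp
  then have "(\<lambda>n. z ^ Suc n / of_nat (Suc n)) sums (- ln (1 - z))"
    by (rule iffD2[OF sums_Suc_iff])
  then have "(\<lambda>n. z ^ Suc n / of_nat (Suc n) / z) sums (- ln (1 - z) / z)"
    by (intro sums_divide) simp
  then have "(\<lambda>n. diffs c n * z ^ n) sums (- ln (1 - z) / z)"
    by (simp only: dc)
  then have S: "(\<Sum>n. diffs c n * z ^ n) = - ln (1 - z) / z" by (rule sums_unique[symmetric])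
  have ev: "\<forall>\<^sub>F y in nhds z. Li2 y = (\<Sum>n. c n * y ^ n)"
  proof -
    have "\<forall>\<^sub>F y in nhds z. y \<in> {-1<..<1}"
      by (rule eventually_nhds_in_open) (use assms in auto)
    then show ?thesis by eventually_elim (auto intro: eq)
  qed
  have "(Li2 has_real_derivative (\<Sum>n. diffs c n * z ^ n)) (at z)"
    by (subst DERIV_cong_ev[OF refl ev refl]) (rule D)
  then show ?thesis unfolding S .
qed


lemma t3: fixes y a b :: real assumes y0: "y \<noteq> 0" "2*y - 1 \<noteq> 0"
  shows "(- (2 * (a - b))) / ((2*y-1)/y^2) * (2*(1-y)/y^3) = -4*(a-b)*(1-y)/(y*(2*y-1))"
proof -
  have "(- (2 * (a - b))) / ((2*y-1)/y^2) * (2*(1-y)/y^3) = (- (2 * (a - b))) * y^2 * (2*(1-y)) / ((2*y-1) * y^3)"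
    by simp
  also have "\<dots> = (- (2 * (a - b))) * (2*(1-y)) / ((2*y-1) * y)"
    using y0 by (simp add: power2_eq_square power3_eq_cube)
  also have "\<dots> = -4*(a-b)*(1-y)/(y*(2*y-1))" by (simp add: algebra_simps)
  finally show ?thesis .
qed
lemma s: fixes y a b :: real assumes y0: "y \<noteq> 0" "2*y - 1 \<noteq> 0"
  shows "-2*(a-b)/(y*(2*y-1)) - 2 * (- a / y) - (-4*(a-b)*(1-y)/(y*(2*y-1))) - 2 * b / y = 0"
proof -
  have "-2*(a-b)/(y*(2*y-1)) + (4*(a-b)*(1-y)/(y*(2*y-1))) = (4*(a-b)*(1-y) - 2*(a-b))/(y*(2*y-1))"
    by (simp add: diff_divide_distrib add_divide_distrib)
  also have "4*(a-b)*(1-y) - 2*(a-b) = -2*(a-b)*(2*y-1)" by (simp add: algebra_simps)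
  also have "-2*(a-b)*(2*y-1)/(y*(2*y-1)) = -2*(a-b)/y" using y0 by simp
  finally have "-2*(a-b)/(y*(2*y-1)) + (4*(a-b)*(1-y)/(y*(2*y-1))) = -2*(a-b)/y" .
  moreover have "- 2 * (- a / y) - 2 * b / y = 2*(a-b)/y" by (simp add: diff_divide_distrib)
  moreover have "-2*(a-b)/y = - (2*(a-b)/y)" by (simp add: minus_divide_left)
  ultimately show ?thesis by linarith
qed

lemma deriv_q3:
  fixes y :: real assumes "y \<noteq> 0"
  shows "((\<lambda>y. (2*y-1)/y^2) has_real_derivative 2*(1-y)/y^3) (at y)"
proof -
  have "((\<lambda>y. (2*y-1)/y^2) has_real_derivative (2 * y^2 - (2*y-1) * (2*y)) / (y^2*y^2)) (at y)"
    using assms by (auto intro!: derivative_eq_intros simp: power2_eq_square)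
  moreover have "(2 * y^2 - (2*y-1) * (2*y)) / (y^2*y^2) = 2*(1-y)/y^3"
    using assms by (simp add: divide_simps power2_eq_square power3_eq_cube) (simp add: algebra_simps)
  ultimately show ?thesis by simp
qed

lemma deriv_q1:
  fixes y :: real assumes "y \<noteq> 0"
  shows "((\<lambda>y. 2 - 1/y) has_real_derivative 1/y^2) (at y)"
  using assms by (auto intro!: derivative_eq_intros simp: power2_eq_square)

lemma t1: fixes y a b :: real assumes y0: "y \<noteq> 0" "2*y - 1 \<noteq> 0"
  shows "2 * ((- (a - b)) / (2 - 1/y) * (1 / y^2)) = -2*(a-b)/(y*(2*y-1))"
proof -
  have q1: "2 - 1/y = (2*y-1)/y" using y0 by (simp add: field_simps)
  show ?thesis unfolding q1 using y0 by (simp add: divide_simps power2_eq_square)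
qed

lemma rng: fixes x y :: real assumes "1/2 < x" "x \<le> y" "y \<le> 1"
  shows "2 - 1/y \<in> {-1..1}" "y \<in> {-1..1}" "(2*y-1)/y^2 \<in> {-1..1}"
  proof -
    have y: "1/2 < y" "y \<le> 1" using assms by auto
    have "0 \<le> (y-1)^2" by simp
    then have "2*y - 1 \<le> y^2" by (simp add: power2_eq_square algebra_simps)
    then show "(2*y-1)/y^2 \<in> {-1..1}" using y
      by (auto simp: divide_simps)
    show "2 - 1/y \<in> {-1..1}" "y \<in> {-1..1}" using y by (auto simp: divide_simps)
  qed

lemma a13: fixes y :: real assumes "1/2 < y" "y < 1"
  shows "0 < 2 - 1/y" "2 - 1/y < 1" "0 < (2*y-1)/y^2" "(2*y-1)/y^2 < 1"
proof -
  show "0 < 2 - 1/y" "2 - 1/y < 1" using assms by (auto simp: divide_simps)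
  have "0 < (y-1)^2" using assms by simp
  then show "0 < (2*y-1)/y^2" "(2*y-1)/y^2 < 1" using assms
    by (auto simp: divide_simps power2_eq_square algebra_simps)
qed

lemma l13: fixes y :: real assumes "0 < y" "y < 1"
  shows "ln (1 - (2 - 1/y)) = ln (1-y) - ln y" "ln (1 - (2*y-1)/y^2) = 2 * (ln (1-y) - ln y)"
proof -
      have "1 - (2 - 1/y) = (1-y)/y" using assms by (simp add: field_simps)
      then show "ln (1 - (2 - 1/y)) = ln (1-y) - ln y" using assms by (simp add: ln_div)
      have "1 - (2*y-1)/y^2 = ((1-y)/y)^2" using assms by (simp add: field_simps power2_eq_square)
      then show "ln (1 - (2*y-1)/y^2) = 2 * (ln (1-y) - ln y)" using assms by (simp add: ln_div ln_realpow)
qed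

lemma facts:
  fixes n :: nat and u :: real
  assumes "n \<ge> 1"
    and "u > 0"
    and "(\<Sum>k=n..2*n+1. u ^ k) - (\<Sum>k<n. u ^ k) = 0"
  shows "1/2 < u^n \<and> u^n < 1 \<and> u ^ (n+2) = 2 - 1/u^n \<and> u ^ 2 = (2*u^n-1)/(u^n)^2 \<and> (real n)\<^sup>2 * (ln u)\<^sup>2 = (ln (u^n))^2"
proof -
  have u1: "u \<noteq> 1"
  proof
    assume "u = 1"
    with assms(3) have "real (card {n..2*n+1}) - real n = 0" by simp
    then show False by simp
  qed
  have g1: "(1-u) * (\<Sum>k=n..2*n+1. u ^ k) = u^n - u^Suc (2*n+1)"
    by (rule sum_gp_multiplied) simp
  have g2: "(1-u) * (\<Sum>k<n. u ^ k) = 1 - u^n"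
    using u1 by (simp add: sum_gp_strict)
  define x where "x = u ^ n"
  have E: "x^2 * u^2 = 2*x - 1"
  proof -
    have "(1-u) * ((\<Sum>k=n..2*n+1. u ^ k) - (\<Sum>k<n. u ^ k)) = 0" using assms(3) by simp
    then have "u^n - u^Suc (2*n+1) - (1 - u^n) = 0" using g1 g2 by (simp add: right_diff_distrib)
    moreover have "u^Suc (2*n+1) = x^2 * u^2"
    proof -
      have "Suc (2*n+1) = n + n + 2" by simp
      then show ?thesis unfolding x_def by (simp only: power_add power2_eq_square)
    qed
    ultimately show ?thesis unfolding x_def by simp
  qed
  have x0: "0 < x" using assms(2) by (simp add: x_def)
  have ult1: "u < 1"
  proof (rule ccontr)
    assume "\<not> u < 1"
    with u1 have "u > 1" by simp
    then have "u^2 > 1" by simp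
    then have "x^2 * u^2 > x^2 * 1" using x0 by (intro mult_strict_left_mono) auto
    with E have "0 > (x-1)^2" by (simp add: power2_eq_square algebra_simps)
    then show False by simp
  qed
  have x1: "x < 1" unfolding x_def using assms ult1 by (simp add: power_less_one_iff)
  have xh: "1/2 < x"
  proof -
    have "0 < x^2 * u^2" using x0 assms(2) by simp
    then show ?thesis using E by simp
  qed
  have e1: "u ^ (n+2) = 2 - 1/x"
  proof -
    have "u ^ (n+2) = x * u^2" by (simp add: x_def power_add power2_eq_square)
    also have "\<dots> = 2 - 1/x" using E x0 by (simp add: field_simps power2_eq_square)
    finally show ?thesis .
  qed
  have e2: "u ^ 2 = (2*x-1)/x^2" using E x0 by (simp add: field_simps)
  have e3: "(real n)\<^sup>2 * (ln u)\<^sup>2 = (ln x)^2"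
    using assms(2) by (simp add: x_def ln_realpow power_mult_distrib)
  show ?thesis using xh x1 e1 e2 e3 unfolding x_def by simp
qed

lemma main_identity:
  fixes x :: real assumes x: "1/2 < x" "x < 1"
  shows "2 * Li2 (2 - 1/x) - 2 * Li2 x - Li2 ((2*x-1)/x^2) - (ln x)^2 = - (pi^2/6)"
proof -
  define F where "F y = 2 * Li2 (2 - 1/y) - 2 * Li2 y - Li2 ((2*y-1)/y^2) - (ln y)^2" for y :: real
  have nz: "\<forall>y\<in>{x..1}. y \<noteq> 0" using x by auto
  have nz2: "\<forall>y\<in>{x..1}. y^2 \<noteq> 0" using x by auto
  have c1: "continuous_on {x..1} (\<lambda>y. Li2 (2 - 1/y))"
  proof (rule continuous_on_compose2[OF Li2_cont])
    show "continuous_on {x..1} (\<lambda>y. 2 - 1/y)"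
      by (intro continuous_on_diff continuous_on_const continuous_on_divide continuous_on_id nz)
    show "(\<lambda>y. 2 - 1/y) ` {x..1} \<subseteq> {-1..1}"
      using rng(1)[OF x(1)] by auto
  qed
  have c2: "continuous_on {x..1} (\<lambda>y. Li2 y)"
    by (rule continuous_on_subset[OF Li2_cont]) (use x in auto)
  have c3: "continuous_on {x..1} (\<lambda>y. Li2 ((2*y-1)/y^2))"
  proof (rule continuous_on_compose2[OF Li2_cont])
    show "continuous_on {x..1} (\<lambda>y. (2*y-1)/y^2)"
      by (intro continuous_on_diff continuous_on_const continuous_on_divide continuous_on_id
          continuous_on_mult continuous_on_power nz2)
    show "(\<lambda>y. (2*y-1)/y^2) ` {x..1} \<subseteq> {-1..1}"
      using rng(3)[OF x(1)] by auto
  qed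
  have c4: "continuous_on {x..1} (\<lambda>y. (ln y)^2)"
    by (intro continuous_on_power continuous_on_ln continuous_on_id) (use x in auto)
  have cont: "continuous_on {x..1} F" unfolding F_def[abs_def]
    by (intro continuous_on_diff continuous_on_mult continuous_on_const c1 c2 c3 c4)
  have der: "(F has_real_derivative 0) (at y)" if y: "x < y" "y < 1" for y
  proof -
    have y0: "0 < y" "1/2 < y" "y \<noteq> 0" "2*y - 1 \<noteq> 0" using x y by auto
    note a = a13[OF y0(2) y(2)]
    have d1: "((\<lambda>y. Li2 (2 - 1/y)) has_real_derivative
        (- ln (1 - (2 - 1/y)) / (2 - 1/y)) * (1 / y^2)) (at y)"
      by (rule DERIV_chain2[where g="\<lambda>y. 2 - 1/y", OF Li2_deriv[OF a(1,2)] deriv_q1[OF y0(3)]])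
    have d3: "((\<lambda>y. Li2 ((2*y-1)/y^2)) has_real_derivative
        (- ln (1 - (2*y-1)/y^2) / ((2*y-1)/y^2)) * (2*(1-y)/y^3)) (at y)"
      by (rule DERIV_chain2[where g="\<lambda>y. (2*y-1)/y^2", OF Li2_deriv[OF a(3,4)] deriv_q3[OF y0(3)]])
    have d2: "(Li2 has_real_derivative (- ln (1 - y) / y)) (at y)"
      by (rule Li2_deriv) (use y0 y in auto)
    have d4: "((\<lambda>y. (ln y)^2) has_real_derivative (2 * ln y / y)) (at y)"
      using y0 by (auto intro!: derivative_eq_intros)
    have dF: "(F has_real_derivative
        2 * ((- ln (1 - (2 - 1/y)) / (2 - 1/y)) * (1 / y^2)) - 2 * (- ln (1 - y) / y)
        - (- ln (1 - (2*y-1)/y^2) / ((2*y-1)/y^2)) * (2*(1-y)/y^3) - 2 * ln y / y) (at y)"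
      unfolding F_def[abs_def]
      by (intro DERIV_diff DERIV_cmult d1 d2 d3 d4)
    note l = l13[OF y0(1) y(2)]
    have "2 * ((- ln (1 - (2 - 1/y)) / (2 - 1/y)) * (1 / y^2)) - 2 * (- ln (1 - y) / y)
        - (- ln (1 - (2*y-1)/y^2) / ((2*y-1)/y^2)) * (2*(1-y)/y^3) - 2 * ln y / y = 0"
      unfolding l t1[OF y0(3,4)] t3[OF y0(3,4)] by (rule s[OF y0(3,4)])
    with dF show ?thesis by simp
  qed
  have "F 1 = F x" by (rule DERIV_isconst_end[OF x(2) cont der]) auto
  moreover have "F 1 = - (pi^2/6)" by (simp add: F_def Li2_one)
  ultimately show ?thesis by (simp add: F_def)
qed

theorem theorem3p2:
  fixes n :: nat and u :: real
  assumes "n \<ge> 1"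
    and "u > 0"
    and "(\<Sum>k=n..2*n+1. u ^ k) - (\<Sum>k<n. u ^ k) = 0"
  shows "2 * Li2 (u ^ (n + 2)) - 2 * Li2 (u ^ n) - Li2 (u ^ 2) - (real n)\<^sup>2 * (ln u)\<^sup>2
           = - (pi\<^sup>2 / 6)"
proof -
  note f = facts[OF assms]
  have "2 * Li2 (2 - 1/u^n) - 2 * Li2 (u^n) - Li2 ((2*u^n-1)/(u^n)^2) - (ln (u^n))^2 = - (pi^2/6)"
    using f by (intro main_identity) auto
  then show ?thesis using f by simp
qed

end
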